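(* Let $T$ be a tournament and let $\sigma$ be any ordering of $V(T)$ in which the vertices appear in non-decreasing order of in-degree. Then $\Delta_\sigma(T)\le 3\,\Delta(T)$. Moreover, the factor $3$ is tight: there exist a tournament $T$ with $\Delta(T)\ge 1$ and an ordering $\sigma$ of $V(T)$ in non-decreasing order of in-degree with $\Delta_\sigma(T)=3\,\Delta(T)$.
   Context: A tournament is a digraph with exactly one arc between each pair of distinct vertices; $d^-(v)$ is the in-degree of $v$. For an ordering $\sigma=\langle v_1,\dots,v_n\rangle$ of $V(T)$, an arc $(v_i,v_j)$ is backward if $j<i$. $d_\sigma(v)$ is the number of backward arcs incident to $v$, $\Delta_\sigma(T)=\max_v d_\sigma(v)$, and the degreewidth is $\Delta(T)=\min_\sigma\Delta_\sigma(T)$ over all orderings $\sigma$. *)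

theory Defs
  imports Main
begin

definition tournament :: "'a set \<Rightarrow> ('a \<Rightarrow> 'a \<Rightarrow> bool) \<Rightarrow> bool" where
  "tournament V A \<longleftrightarrow> finite V
     \<and> (\<forall>u v. A u v \<longrightarrow> u \<in> V \<and> v \<in> V)
     \<and> (\<forall>v. \<not> A v v)
     \<and> (\<forall>u\<in>V. \<forall>v\<in>V. u \<noteq> v \<longrightarrow> (A u v \<longleftrightarrow> \<not> A v u))"

definition indeg :: "'a set \<Rightarrow> ('a \<Rightarrow> 'a \<Rightarrow> bool) \<Rightarrow> 'a \<Rightarrow> nat" where
  "indeg V A v = card {u \<in> V. A u v}"

definition is_ordering :: "'a set \<Rightarrow> 'a list \<Rightarrow> bool" where
  "is_ordering V \<sigma> \<longleftrightarrow> distinct \<sigma> \<and> set \<sigma> = V"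

definition pos :: "'a list \<Rightarrow> 'a \<Rightarrow> nat" where
  "pos \<sigma> v = (THE i. i < length \<sigma> \<and> \<sigma> ! i = v)"

definition backward :: "('a \<Rightarrow> 'a \<Rightarrow> bool) \<Rightarrow> 'a list \<Rightarrow> 'a \<Rightarrow> 'a \<Rightarrow> bool" where
  "backward A \<sigma> u v \<longleftrightarrow> A u v \<and> pos \<sigma> v < pos \<sigma> u"

definition d_sigma :: "'a set \<Rightarrow> ('a \<Rightarrow> 'a \<Rightarrow> bool) \<Rightarrow> 'a list \<Rightarrow> 'a \<Rightarrow> nat" where
  "d_sigma V A \<sigma> v = card {u \<in> V. backward A \<sigma> v u \<or> backward A \<sigma> u v}"

definition Delta_sigma :: "'a set \<Rightarrow> ('a \<Rightarrow> 'a \<Rightarrow> bool) \<Rightarrow> 'a list \<Rightarrow> nat" where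
  "Delta_sigma V A \<sigma> = Max (insert 0 (d_sigma V A \<sigma> ` V))"

definition degreewidth :: "'a set \<Rightarrow> ('a \<Rightarrow> 'a \<Rightarrow> bool) \<Rightarrow> nat" where
  "degreewidth V A = Min {Delta_sigma V A \<sigma> | \<sigma>. is_ordering V \<sigma>}"

definition indeg_sorted :: "'a set \<Rightarrow> ('a \<Rightarrow> 'a \<Rightarrow> bool) \<Rightarrow> 'a list \<Rightarrow> bool" where
  "indeg_sorted V A \<sigma> \<longleftrightarrow>
     (\<forall>i j. i < j \<and> j < length \<sigma> \<longrightarrow> indeg V A (\<sigma> ! i) \<le> indeg V A (\<sigma> ! j))"

end

theory Submission
  imports Defs
begin


lemma pos_nth: "distinct s \<Longrightarrow> i < length s \<Longrightarrow> pos s (s ! i) = i"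
  unfolding pos_def by (rule the_equality) (auto simp: nth_eq_iff_index_eq)

lemma pos_in: "distinct s \<Longrightarrow> v \<in> set s \<Longrightarrow> pos s v < length s \<and> s ! pos s v = v"
  by (metis in_set_conv_nth pos_nth)

lemma pos_inj: "distinct s \<Longrightarrow> u \<in> set s \<Longrightarrow> v \<in> set s \<Longrightarrow> pos s u = pos s v \<Longrightarrow> u = v"
  by (metis pos_in)

lemma card_before: assumes "distinct s" "v \<in> set s"
  shows "card {u \<in> set s. pos s u < pos s v} = pos s v"
proof -
  have "{u \<in> set s. pos s u < pos s v} = (nth s) ` {..<pos s v}"
  proof
    show "{u \<in> set s. pos s u < pos s v} \<subseteq> (nth s) ` {..<pos s v}"
      using assms pos_in by (metis (no_types, lifting) image_eqI lessThan_iff mem_Collect_eq subsetI)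
    show "(nth s) ` {..<pos s v} \<subseteq> {u \<in> set s. pos s u < pos s v}"
      using assms pos_in[OF assms] pos_nth[OF assms(1)] by auto
  qed
  moreover have "inj_on (nth s) {..<pos s v}"
    using assms pos_in[OF assms] by (auto simp: inj_on_def nth_eq_iff_index_eq)
  ultimately show ?thesis by (simp add: card_image)
qed

lemma card_pos_bound: assumes "distinct s" "X \<subseteq> set s" "pos s ` X \<subseteq> I" "finite I"
  shows "card X \<le> card I"
proof -
  have "inj_on (pos s) X" using assms pos_inj by (meson inj_onI subsetD)
  then have "card X = card (pos s ` X)" by (simp add: card_image)
  also have "\<dots> \<le> card I" using assms by (simp add: card_mono)
  finally show ?thesis .
qed

lemma tfin: "tournament V A \<Longrightarrow> finite V" unfolding tournament_def by blast
lemma tarc: "tournament V A \<Longrightarrow> A u v \<Longrightarrow> u \<in> V \<and> v \<in> V" unfolding tournament_def by blast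
lemma tirr: "tournament V A \<Longrightarrow> \<not> A v v" unfolding tournament_def by blast
lemma ttot: "tournament V A \<Longrightarrow> u \<in> V \<Longrightarrow> v \<in> V \<Longrightarrow> u \<noteq> v \<Longrightarrow> A u v \<longleftrightarrow> \<not> A v u"
  unfolding tournament_def by blast

lemma d_sigma_le: "tournament V A \<Longrightarrow> d_sigma V A s v \<le> card V"
  unfolding d_sigma_def by (intro card_mono) (auto dest: tfin)

lemma Delta_sigma_le: "tournament V A \<Longrightarrow> Delta_sigma V A s \<le> card V"
  unfolding Delta_sigma_def using d_sigma_le[of V A s] tfin[of V A]
  by (subst Max_le_iff) auto

lemma d_le_Delta: "tournament V A \<Longrightarrow> v \<in> V \<Longrightarrow> d_sigma V A s v \<le> Delta_sigma V A s"
  unfolding Delta_sigma_def by (intro Max_ge) (auto dest: tfin)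

lemma dw_attained: assumes "tournament V A"
  shows "\<exists>t. is_ordering V t \<and> Delta_sigma V A t = degreewidth V A"
proof -
  let ?S = "{Delta_sigma V A s | s. is_ordering V s}"
  have "?S \<subseteq> {..card V}" using Delta_sigma_le[OF assms] by auto
  hence fin: "finite ?S" by (rule finite_subset) simp
  obtain xs where "set xs = V" "distinct xs" using assms finite_distinct_list tfin by metis
  hence ne: "?S \<noteq> {}" unfolding is_ordering_def by auto
  have "degreewidth V A \<in> ?S" unfolding degreewidth_def using Min_in[OF fin ne] .
  thus ?thesis by auto
qed

lemma dw_le: assumes "tournament V A" "is_ordering V s"
  shows "degreewidth V A \<le> Delta_sigma V A s"
proof -
  let ?S = "{Delta_sigma V A s | s. is_ordering V s}"
  have "?S \<subseteq> {..card V}" using Delta_sigma_le[OF assms(1)] by auto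
  hence fin: "finite ?S" by (rule finite_subset) simp
  show ?thesis unfolding degreewidth_def using assms(2) by (intro Min_le[OF fin]) auto
qed


lemma indeg_rel:
  assumes T: "tournament V A" and O: "is_ordering V t" and v: "v \<in> V"
  shows "indeg V A v + card {u\<in>V. A v u \<and> pos t u < pos t v}
        = pos t v + card {u\<in>V. A u v \<and> pos t v < pos t u}"
proof -
  have fin: "finite V" using T tfin by blast
  have ds: "distinct t" "set t = V" using O unfolding is_ordering_def by auto
  define E where "E = {u\<in>V. A u v \<and> pos t u < pos t v}"
  define Ou where "Ou = {u\<in>V. A v u \<and> pos t u < pos t v}"
  define I where "I = {u\<in>V. A u v \<and> pos t v < pos t u}"
  have ne: "pos t u \<noteq> pos t v" if "u \<in> V" "A u v" for u
  proof
    assume "pos t u = pos t v"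
    hence "u = v" using pos_inj[of t u v] ds that(1) v by simp
    thus False using that(2) tirr[OF T] by simp
  qed
  have "{u\<in>V. A u v} = E \<union> I"
    unfolding E_def I_def using ne by (auto simp: nat_neq_iff)
  moreover have "E \<inter> I = {}" unfolding E_def I_def by auto
  moreover have "finite E" "finite I" using fin unfolding E_def I_def by auto
  ultimately have 1: "indeg V A v = card E + card I"
    unfolding indeg_def by (simp add: card_Un_disjoint)
  have tt: "u \<in> V \<Longrightarrow> u \<noteq> v \<Longrightarrow> A u v \<longleftrightarrow> \<not> A v u" for u
    by (rule ttot[OF T _ v])
  have "{u\<in>V. pos t u < pos t v} = E \<union> Ou"
  proof (rule set_eqI)
    fix u
    show "u \<in> {u\<in>V. pos t u < pos t v} \<longleftrightarrow> u \<in> E \<union> Ou"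
    proof (cases "u \<in> V \<and> pos t u < pos t v")
      case True
      hence "u \<noteq> v" by auto
      hence "A u v \<or> A v u" using tt[of u] True by blast
      thus ?thesis using True unfolding E_def Ou_def by blast
    next
      case False
      thus ?thesis unfolding E_def Ou_def by blast
    qed
  qed
  moreover have "E \<inter> Ou = {}"
  proof -
    have "u \<notin> E \<inter> Ou" for u 
    proof
      assume u: "u \<in> E \<inter> Ou"
      hence "u \<noteq> v" "u \<in> V" "A u v" "A v u" unfolding E_def Ou_def by auto
      thus False using tt[of u] by blast
    qed
    thus ?thesis by blast
  qed
  moreover have "finite Ou" using fin unfolding Ou_def by auto
  ultimately have "card {u\<in>V. pos t u < pos t v} = card E + card Ou"
    using \<open>finite E\<close> by (simp add: card_Un_disjoint)
  moreover have "card {u\<in>V. pos t u < pos t v} = pos t v"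
    using card_before[of t v] ds v by simp
  ultimately show ?thesis using 1 unfolding Ou_def I_def by simp
qed


lemma indeg_bounds:
  assumes T: "tournament V A" and O: "is_ordering V t" and u: "u \<in> V"
  shows "pos t u \<le> indeg V A u + Delta_sigma V A t"
    and "indeg V A u \<le> pos t u + Delta_sigma V A t"
    and "card {w\<in>V. A u w \<and> pos t w < pos t u} \<le> Delta_sigma V A t"
    and "card {w\<in>V. A w u \<and> pos t u < pos t w} \<le> Delta_sigma V A t"
proof -
  have fin: "finite V" using T tfin by blast
  let ?B = "{w \<in> V. backward A t u w \<or> backward A t w u}"
  have "card {w\<in>V. A u w \<and> pos t w < pos t u} \<le> card ?B"
    using fin by (intro card_mono) (auto simp: backward_def)
  also have "card ?B \<le> Delta_sigma V A t"
    using d_le_Delta[OF T u, of t] unfolding d_sigma_def .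
  finally show ob: "card {w\<in>V. A u w \<and> pos t w < pos t u} \<le> Delta_sigma V A t" .
  have "card {w\<in>V. A w u \<and> pos t u < pos t w} \<le> card ?B"
    using fin by (intro card_mono) (auto simp: backward_def)
  also have "card ?B \<le> Delta_sigma V A t"
    using d_le_Delta[OF T u, of t] unfolding d_sigma_def .
  finally show i: "card {w\<in>V. A w u \<and> pos t u < pos t w} \<le> Delta_sigma V A t" .
  note r = indeg_rel[OF T O u]
  show "pos t u \<le> indeg V A u + Delta_sigma V A t" using r ob i by linarith
  show "indeg V A u \<le> pos t u + Delta_sigma V A t" using r ob i by linarith
qed

lemma sorted_pos:
  assumes O: "is_ordering V s" and S: "indeg_sorted V A s" and u: "u \<in> V" and v: "v \<in> V"
    and lt: "pos s u < pos s v"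
  shows "indeg V A u \<le> indeg V A v"
proof -
  have ds: "distinct s" "set s = V" using O unfolding is_ordering_def by auto
  have pu: "pos s u < length s" "s ! pos s u = u" using pos_in[of s u] ds u by auto
  have pv: "pos s v < length s" "s ! pos s v = v" using pos_in[of s v] ds v by auto
  have "indeg V A (s ! pos s u) \<le> indeg V A (s ! pos s v)"
    using S lt pv(1) unfolding indeg_sorted_def by blast
  thus ?thesis using pu pv by simp
qed

lemma upper:
  assumes T: "tournament V A" and O: "is_ordering V s" and S: "indeg_sorted V A s"
  shows "Delta_sigma V A s \<le> 3 * degreewidth V A"
proof -
  obtain t where Ot: "is_ordering V t" and kt: "Delta_sigma V A t = degreewidth V A"
    using dw_attained[OF T] by blast
  define k where "k = degreewidth V A"
  have fin: "finite V" using T tfin by blast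
  have dt: "distinct t" "set t = V" using Ot unfolding is_ordering_def by auto
  have main: "d_sigma V A s v \<le> 3 * k" if v: "v \<in> V" for v
  proof -
    define p where "p = pos t"
    define ob where "ob = card {w\<in>V. A v w \<and> p w < p v}"
    define i where "i = card {w\<in>V. A w v \<and> p v < p w}"
    have ok: "ob \<le> k" using indeg_bounds(3)[OF T Ot v] kt unfolding ob_def p_def k_def by simp
    have ik: "i \<le> k" using indeg_bounds(4)[OF T Ot v] kt by (simp add: i_def p_def k_def)
    have rel: "indeg V A v + ob = p v + i" using indeg_rel[OF T Ot v] unfolding ob_def i_def p_def .
    have lb: "p u \<le> indeg V A u + k" if "u \<in> V" for u
      using indeg_bounds(1)[OF T Ot that] kt unfolding p_def k_def by simp
    have ub: "indeg V A u \<le> p u + k" if "u \<in> V" for u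
      using indeg_bounds(2)[OF T Ot that] kt unfolding p_def k_def by simp
    define U where "U = {u \<in> V. backward A s v u \<or> backward A s u v}"
    define B where "B = {u \<in> V. backward A t v u \<or> backward A t u v}"
    define X where "X = {u\<in>V. p v < p u \<and> p u + ob \<le> p v + k + i}"
    define Y where "Y = {u\<in>V. p u < p v \<and> p v + i \<le> p u + k + ob}"
    have sub: "U \<subseteq> B \<union> X \<union> Y"
    proof
      fix u assume uU: "u \<in> U"
      hence uV: "u \<in> V" unfolding U_def by blast
      show "u \<in> B \<union> X \<union> Y"
      proof (cases "u \<in> B")
        case True thus ?thesis by blast
      next
        case nB: False
        have nB1: "\<not> (A v u \<and> p u < p v)" and nB2: "\<not> (A u v \<and> p v < p u)"
          using nB uV unfolding B_def backward_def p_def by auto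
        have neq: "p u \<noteq> p v" if "A u v \<or> A v u"
        proof
          assume "p u = p v"
          hence "u = v" using pos_inj[of t u v] dt uV v unfolding p_def by simp
          thus False using that tirr[OF T] by simp
        qed
        from uU have "backward A s v u \<or> backward A s u v" unfolding U_def by blast
        thus ?thesis
        proof
          assume bw: "backward A s v u"
          hence a: "A v u" and q: "pos s u < pos s v" unfolding backward_def by auto
          have "p v < p u" using nB1 a neq by auto
          moreover have "indeg V A u \<le> indeg V A v" using sorted_pos[OF O S uV v q] .
          moreover note lb[OF uV] rel
          ultimately have "u \<in> X" unfolding X_def using uV by simp
          thus ?thesis by blast
        next
          assume bw: "backward A s u v"
          hence a: "A u v" and q: "pos s v < pos s u" unfolding backward_def by auto
          have "p u < p v" using nB2 a neq by auto
          moreover have "indeg V A v \<le> indeg V A u" using sorted_pos[OF O S v uV q] .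
          moreover note ub[OF uV] rel
          ultimately have "u \<in> Y" unfolding Y_def using uV by simp
          thus ?thesis by blast
        qed
      qed
    qed
    have fB: "finite B" "finite X" "finite Y" using fin unfolding B_def X_def Y_def by auto
    have cB: "card B \<le> k" using d_le_Delta[OF T v, of t] kt unfolding d_sigma_def B_def k_def by simp
    have cX: "card X \<le> k + i - ob"
    proof -
      have "card X \<le> card {p v<..p v + k + i - ob}"
        by (rule card_pos_bound[of t]) (use dt ok in \<open>auto simp: X_def p_def\<close>)
      thus ?thesis using ok by simp
    qed
    have cY: "card Y \<le> k + ob - i"
    proof -
      have "card Y \<le> card {p v + i - (k + ob)..<p v}"
        by (rule card_pos_bound[of t]) (use dt in \<open>auto simp: Y_def p_def\<close>)
      thus ?thesis using ik by simp
    qed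
    have "d_sigma V A s v = card U" unfolding d_sigma_def U_def ..
    also have "\<dots> \<le> card (B \<union> X \<union> Y)" using fB sub by (intro card_mono) auto
    also have "\<dots> \<le> card B + card X + card Y"
      by (metis card_Un_le add_le_mono1 order_trans)
    also have "\<dots> \<le> 3 * k" using cB cX cY ok ik by linarith
    finally show ?thesis .
  qed
  show ?thesis unfolding Delta_sigma_def k_def[symmetric] using main fin
    by (subst Max_le_iff) auto
qed


definition exV :: "nat set" where "exV = {0,1,2,3,4}"
definition exA :: "nat \<Rightarrow> nat \<Rightarrow> bool" where
  "exA u v \<longleftrightarrow> (u,v) \<in> {(0,1),(0,2),(3,0),(0,4),(1,2),(1,3),(4,1),(2,3),(2,4),(3,4)}"

lemma ex_tour: "tournament exV exA"
  unfolding tournament_def exV_def exA_def by auto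

lemma ex_indeg:
  "indeg exV exA 0 = 1" "indeg exV exA 1 = 2" "indeg exV exA 2 = 2"
  "indeg exV exA 3 = 2" "indeg exV exA 4 = 3"
proof -
  have "{u\<in>exV. exA u 0} = {3}" by (auto simp: exV_def exA_def)
  thus "indeg exV exA 0 = 1" by (simp add: indeg_def)
  have "{u\<in>exV. exA u 1} = {0,4}" by (auto simp: exV_def exA_def)
  thus "indeg exV exA 1 = 2" by (simp add: indeg_def)
  have "{u\<in>exV. exA u 2} = {0,1}" by (auto simp: exV_def exA_def)
  thus "indeg exV exA 2 = 2" by (simp add: indeg_def)
  have "{u\<in>exV. exA u 3} = {1,2}" by (auto simp: exV_def exA_def)
  thus "indeg exV exA 3 = 2" by (simp add: indeg_def)
  have "{u\<in>exV. exA u 4} = {0,2,3}" by (auto simp: exV_def exA_def)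
  thus "indeg exV exA 4 = 3" by (simp add: indeg_def)
qed

definition exS :: "nat list" where "exS = [0,2,3,1,4]"

lemma ex_indeg1: "indeg exV exA (Suc 0) = 2" using ex_indeg(2) by simp

lemma exS_ord: "is_ordering exV exS" unfolding is_ordering_def exS_def exV_def by auto

lemma exS_sorted: "indeg_sorted exV exA exS"
  unfolding indeg_sorted_def
proof (intro allI impI)
  fix i j assume ij: "i < j \<and> j < length exS"
  have idx: "map (indeg exV exA) exS = [1,2,2,2,3]" by (simp add: exS_def ex_indeg ex_indeg1)
  have "i < 5" "j < 5" using ij by (auto simp: exS_def)
  hence "i \<in> {0,1,2,3,4}" "j \<in> {0,1,2,3,4}" by auto
  thus "indeg exV exA (exS ! i) \<le> indeg exV exA (exS ! j)"
    using ij by (auto simp: exS_def ex_indeg ex_indeg1)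
qed

lemma exS_big: "3 \<le> Delta_sigma exV exA exS"
proof -
  have p: "pos exS 0 = 0" "pos exS 2 = 1" "pos exS 3 = 2" "pos exS 1 = 3" "pos exS 4 = 4" "pos exS (Suc 0) = 3"
    using pos_nth[of exS 0] pos_nth[of exS 1] pos_nth[of exS 2] pos_nth[of exS 3] pos_nth[of exS 4]
    by (auto simp: exS_def)
  have "{2,3,4} \<subseteq> {u \<in> exV. backward exA exS 1 u \<or> backward exA exS u 1}"
    by (auto simp: exV_def backward_def exA_def p)
  hence "card {2::nat,3,4} \<le> d_sigma exV exA exS 1"
    unfolding d_sigma_def by (intro card_mono) (auto simp: exV_def)
  moreover have "d_sigma exV exA exS 1 \<le> Delta_sigma exV exA exS"
    by (rule d_le_Delta[OF ex_tour]) (simp add: exV_def)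
  ultimately show ?thesis by simp
qed

definition exT :: "nat list" where "exT = [0,1,2,3,4]"

lemma exT_ord: "is_ordering exV exT" unfolding is_ordering_def exT_def exV_def by auto

lemma exT_small: "Delta_sigma exV exA exT \<le> 1"
proof -
  have p: "pos exT 0 = 0" "pos exT (Suc 0) = 1" "pos exT 2 = 2" "pos exT 3 = 3" "pos exT 4 = 4"
    using pos_nth[of exT 0] pos_nth[of exT 1] pos_nth[of exT 2] pos_nth[of exT 3] pos_nth[of exT 4]
    by (auto simp: exT_def)
  have d: "d_sigma exV exA exT v \<le> 1" if v: "v \<in> exV" for v
  proof -
    define w where "w = (if v = 0 then 3 else if v = 1 then 4 else if v = 3 then 0 else (1::nat))"
    have "{u \<in> exV. backward exA exT v u \<or> backward exA exT u v} \<subseteq> {w}"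
    proof
      fix u assume "u \<in> {u \<in> exV. backward exA exT v u \<or> backward exA exT u v}"
      hence u: "u \<in> exV" and b: "backward exA exT v u \<or> backward exA exT u v" by auto
      from u v have "u \<in> {0,1,2,3,4}" "v \<in> {0,1,2,3,4}" by (auto simp: exV_def)
      thus "u \<in> {w}" using b
        by (elim insertE emptyE) (simp_all add: p w_def backward_def exA_def)
    qed
    hence "card {u \<in> exV. backward exA exT v u \<or> backward exA exT u v} \<le> card {w}"
      by (intro card_mono) auto
    thus ?thesis unfolding d_sigma_def by simp
  qed
  have fin: "finite exV" by (simp add: exV_def)
  show ?thesis unfolding Delta_sigma_def using d fin
    by (subst Max_le_iff) auto
qed

lemma ex_dw_ge: "1 \<le> degreewidth exV exA"
proof -
  obtain t where Ot: "is_ordering exV t" and kt: "Delta_sigma exV exA t = degreewidth exV exA"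
    using dw_attained[OF ex_tour] by blast
  have dt: "distinct t" "set t = exV" using Ot unfolding is_ordering_def by auto
  have in3: "0 \<in> exV" "1 \<in> exV" "3 \<in> exV" by (auto simp: exV_def)
  have ne: "pos t (0::nat) \<noteq> pos t 1" "pos t (1::nat) \<noteq> pos t 3" "pos t (3::nat) \<noteq> pos t 0"
    using pos_inj[of t 0 1] pos_inj[of t 1 3] pos_inj[of t 3 0] dt in3 by auto
  have arcs: "exA 0 1" "exA 1 3" "exA 3 0" by (auto simp: exA_def)
  have "\<exists>w\<in>exV. \<exists>u\<in>exV. backward exA t w u"
  proof (cases "pos t (1::nat) < pos t 0")
    case True thus ?thesis using arcs in3 unfolding backward_def by blast
  next
    case F1: False
    show ?thesis
    proof (cases "pos t (3::nat) < pos t 1")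
      case True thus ?thesis using arcs in3 unfolding backward_def by blast
    next
      case False
      hence "pos t (0::nat) < pos t 3" using F1 ne by linarith
      thus ?thesis using arcs in3 unfolding backward_def by blast
    qed
  qed
  then obtain w u where w: "w \<in> exV" "u \<in> exV" "backward exA t w u" by blast
  have "u \<in> {x \<in> exV. backward exA t w x \<or> backward exA t x w}" using w by blast
  moreover have "finite {x \<in> exV. backward exA t w x \<or> backward exA t x w}"
    by (simp add: exV_def)
  ultimately have "0 < d_sigma exV exA t w" unfolding d_sigma_def
    using card_gt_0_iff by blast
  hence "1 \<le> d_sigma exV exA t w" by simp
  also have "\<dots> \<le> Delta_sigma exV exA t" by (rule d_le_Delta[OF ex_tour w(1)])
  finally show ?thesis using kt by simp
qed

lemma ex_dw: "degreewidth exV exA = 1"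
  using ex_dw_ge dw_le[OF ex_tour exT_ord] exT_small by linarith

lemma example: "\<exists>(V :: nat set) A \<sigma>. tournament V A \<and> degreewidth V A \<ge> 1
            \<and> is_ordering V \<sigma> \<and> indeg_sorted V A \<sigma>
            \<and> Delta_sigma V A \<sigma> = 3 * degreewidth V A"
proof (intro exI conjI)
  show "tournament exV exA" by (rule ex_tour)
  show "1 \<le> degreewidth exV exA" by (rule ex_dw_ge)
  show "is_ordering exV exS" by (rule exS_ord)
  show "indeg_sorted exV exA exS" by (rule exS_sorted)
  show "Delta_sigma exV exA exS = 3 * degreewidth exV exA"
    using upper[OF ex_tour exS_ord exS_sorted] exS_big ex_dw by simp
qed




theorem mainTheorem3:
  shows "(\<forall>(V :: 'a set) A \<sigma>. tournament V A \<and> is_ordering V \<sigma> \<and> indeg_sorted V A \<sigma>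
            \<longrightarrow> Delta_sigma V A \<sigma> \<le> 3 * degreewidth V A)
       \<and> (\<exists>(V :: nat set) A \<sigma>. tournament V A \<and> degreewidth V A \<ge> 1
            \<and> is_ordering V \<sigma> \<and> indeg_sorted V A \<sigma>
            \<and> Delta_sigma V A \<sigma> = 3 * degreewidth V A)"
  using upper example by blast

end
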